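(* Let $G$ be a tree on $n$ vertices $1,2,\ldots,n$ with edges $e_1,\ldots,e_{n-1}$ and signless Laplacian $Q$. Then the Moore-Penrose inverse $Q^+=[q^+_{i,j}]$ of $Q$ is given, for all vertices $i,j$, by $$q^+_{i,j}=\frac{(-1)^{d(i,j)}}{n^2}\left(\sum_{k:\ i,j\in G_H(e_k)}|G_T(e_k)|^2+\sum_{k:\ i,j\in G_T(e_k)}|G_H(e_k)|^2-\sum_{k:\ e_k\in P_{i-j}}|G_H(e_k)|\,|G_T(e_k)|\right).$$
   Context: The signless Laplacian is $Q=D+A$, where $A$ is the adjacency matrix and $D$ the diagonal degree matrix. Each edge is written $e_k=\{l_k,m_k\}$ with $l_k<m_k$. The head component $G_H(e_k)$ is the connected component of $G\setminus e_k$ containing $m_k$; the tail component $G_T(e_k)$ is the component containing $l_k$. $|X|$ is the number of vertices of $X$. $d(i,j)$ is the graph distance and $P_{i-j}$ is the (unique) path between $i$ and $j$ in $G$; "$e_k\in P_{i-j}$" means $e_k$ is an edge of this path. The Moore-Penrose inverse of a real matrix $A$ is the unique matrix $A^+$ with $AA^+A=A$, $A^+AA^+=A^+$, $(AA^+)^T=AA^+$, $(A^+A)^T=A^+A$. *)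

theory Defs
  imports "Jordan_Normal_Form.Matrix"
begin

definition walk :: "nat set set \<Rightarrow> nat list \<Rightarrow> bool" where
  "walk E xs \<longleftrightarrow> xs \<noteq> [] \<and> (\<forall>i. Suc i < length xs \<longrightarrow> {xs ! i, xs ! Suc i} \<in> E)"

definition path :: "nat set set \<Rightarrow> nat list \<Rightarrow> bool" where
  "path E xs \<longleftrightarrow> walk E xs \<and> distinct xs"

definition is_cycle :: "nat set set \<Rightarrow> nat list \<Rightarrow> bool" where
  "is_cycle E xs \<longleftrightarrow> walk E xs \<and> length xs \<ge> 4 \<and> hd xs = last xs \<and> distinct (butlast xs)"

definition simple_graph :: "nat set \<Rightarrow> nat set set \<Rightarrow> bool" where
  "simple_graph V E \<longleftrightarrow> finite V \<and> (\<forall>e\<in>E. \<exists>u v. e = {u, v} \<and> u \<noteq> v \<and> u \<in> V \<and> v \<in> V)"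

definition connected_on :: "nat set \<Rightarrow> nat set set \<Rightarrow> bool" where
  "connected_on V E \<longleftrightarrow> (\<forall>u\<in>V. \<forall>v\<in>V. \<exists>xs. walk E xs \<and> hd xs = u \<and> last xs = v)"

definition is_tree :: "nat set \<Rightarrow> nat set set \<Rightarrow> bool" where
  "is_tree V E \<longleftrightarrow> simple_graph V E \<and> V \<noteq> {} \<and> connected_on V E \<and> (\<nexists>xs. is_cycle E xs)"

definition gdist :: "nat set set \<Rightarrow> nat \<Rightarrow> nat \<Rightarrow> nat" where
  "gdist E i j = (LEAST k. \<exists>xs. walk E xs \<and> hd xs = i \<and> last xs = j \<and> length xs = Suc k)"

definition path_edges :: "nat set set \<Rightarrow> nat \<Rightarrow> nat \<Rightarrow> nat set set" where
  "path_edges E i j = (let xs = (THE xs. path E xs \<and> hd xs = i \<and> last xs = j)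
     in {{xs ! k, xs ! Suc k} | k. Suc k < length xs})"

definition component :: "nat set \<Rightarrow> nat set set \<Rightarrow> nat \<Rightarrow> nat set" where
  "component V E' v = {u\<in>V. \<exists>xs. walk E' xs \<and> hd xs = v \<and> last xs = u}"

definition head_comp :: "nat set \<Rightarrow> nat set set \<Rightarrow> nat set \<Rightarrow> nat set" where
  "head_comp V E e = component V (E - {e}) (Max e)"

definition tail_comp :: "nat set \<Rightarrow> nat set set \<Rightarrow> nat set \<Rightarrow> nat set" where
  "tail_comp V E e = component V (E - {e}) (Min e)"

definition degree :: "nat set set \<Rightarrow> nat \<Rightarrow> nat" where
  "degree E v = card {e\<in>E. v \<in> e}"

text \<open>Signless Laplacian Q = D + A of a graph on vertices 1..n; matrix entry (a,b) (0-based)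
  corresponds to vertices a+1, b+1.\<close>
definition signless_laplacian :: "nat \<Rightarrow> nat set set \<Rightarrow> real mat" where
  "signless_laplacian n E = mat n n (\<lambda>(a, b).
     (if a = b then real (degree E (a + 1)) else 0) + (if {a + 1, b + 1} \<in> E then 1 else 0))"

definition is_MP_inverse :: "real mat \<Rightarrow> real mat \<Rightarrow> bool" where
  "is_MP_inverse A X \<longleftrightarrow> X \<in> carrier_mat (dim_col A) (dim_row A) \<and>
     A * X * A = A \<and> X * A * X = X \<and>
     transpose_mat (A * X) = A * X \<and> transpose_mat (X * A) = X * A"

definition MP_inverse :: "real mat \<Rightarrow> real mat" where
  "MP_inverse A = (THE X. is_MP_inverse A X)"

end

theory Submission
  imports Defs
begin
definition reach :: "nat set set \<Rightarrow> nat \<Rightarrow> nat \<Rightarrow> bool" where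
  "reach F u v \<longleftrightarrow> (\<exists>xs. walk F xs \<and> hd xs = u \<and> last xs = v)"

lemma walk_Nil[simp]: "\<not> walk F []" by (simp add: walk_def)
lemma walk_single[simp]: "walk F [x]" by (simp add: walk_def)
lemma all_nat_split: "(\<forall>i::nat. P i) = (P 0 \<and> (\<forall>i. P (Suc i)))"
  by (metis not0_implies_Suc)

lemma walk_Cons2[simp]: "walk F (x # y # xs) \<longleftrightarrow> {x,y} \<in> F \<and> walk F (y # xs)"
  unfolding walk_def by (subst all_nat_split) auto

lemma reach_refl: "reach F u u"
  unfolding reach_def by (rule exI[of _ "[u]"]) simp

lemma reach_step: "{x,y} \<in> F \<Longrightarrow> reach F y w \<Longrightarrow> reach F x w"
  unfolding reach_def
proof -
  assume e: "{x,y} \<in> F" and "\<exists>xs. walk F xs \<and> hd xs = y \<and> last xs = w"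
  then obtain xs where xs: "walk F xs" "hd xs = y" "last xs = w" by blast
  then obtain r where "xs = y # r" by (cases xs) auto
  then show "\<exists>xs. walk F xs \<and> hd xs = x \<and> last xs = w"
    using xs e by (intro exI[of _ "x # xs"]) auto
qed

lemma reach_edge: "{x,y} \<in> F \<Longrightarrow> reach F x y"
  using reach_step reach_refl by metis

lemma walk_reach_trans: "walk F xs \<Longrightarrow> reach F (last xs) w \<Longrightarrow> reach F (hd xs) w"
proof (induction xs rule: induct_list012)
  case (3 x y zs)
  then show ?case using reach_step[of x y F w] by auto
qed auto

lemma reach_trans: "reach F u v \<Longrightarrow> reach F v w \<Longrightarrow> reach F u w"
  using walk_reach_trans unfolding reach_def[of F u v] by blast

lemma walk_reach_rev: "walk F xs \<Longrightarrow> reach F (last xs) (hd xs)"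
proof (induction xs rule: induct_list012)
  case (1) then show ?case by simp
next
  case (2 x) then show ?case by (simp add: reach_refl)
next
  case (3 x y zs)
  then have "reach F (last (y # zs)) y" "reach F y x"
    by (auto intro!: reach_edge simp: insert_commute)
  then show ?case using reach_trans by auto
qed

lemma reach_sym: "reach F u v \<Longrightarrow> reach F v u"
  using walk_reach_rev unfolding reach_def[of F u v] by blast

lemma walk_mono: "walk F xs \<Longrightarrow> F \<subseteq> G \<Longrightarrow> walk G xs"
  unfolding walk_def by blast

lemma reach_mono: "reach F u v \<Longrightarrow> F \<subseteq> G \<Longrightarrow> reach G u v"
  unfolding reach_def using walk_mono by blast

lemma walk_drop: "walk F xs \<Longrightarrow> k < length xs \<Longrightarrow> walk F (drop k xs)"
  unfolding walk_def by (auto simp: add.commute)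

lemma walk_take: "walk F xs \<Longrightarrow> 0 < k \<Longrightarrow> walk F (take k xs)"
  unfolding walk_def by auto

lemma walk_snoc: "walk F xs \<Longrightarrow> {last xs, y} \<in> F \<Longrightarrow> walk F (xs @ [y])"
  unfolding walk_def
proof (intro conjI allI impI)
  fix i assume a: "xs \<noteq> [] \<and> (\<forall>i. Suc i < length xs \<longrightarrow> {xs ! i, xs ! Suc i} \<in> F)"
    "{last xs, y} \<in> F" and i: "Suc i < length (xs @ [y])"
  show "{(xs @ [y]) ! i, (xs @ [y]) ! Suc i} \<in> F"
  proof (cases "Suc i < length xs")
    case True then show ?thesis using a by (simp add: nth_append)
  next
    case False
    then have "i = length xs - 1" using i by simp
    then show ?thesis using a False by (simp add: nth_append last_conv_nth)
  qed
qed simp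

lemma walk_to_path: "walk F xs \<Longrightarrow> \<exists>ps. path F ps \<and> hd ps = hd xs \<and> last ps = last xs"
proof (induction xs rule: induct_list012)
  case 1 then show ?case by simp
next
  case (2 x) then show ?case by (intro exI[of _ "[x]"]) (simp add: path_def)
next
  case (3 x y zs)
  then obtain ps where ps: "path F ps" "hd ps = y" "last ps = last (y # zs)" by auto
  show ?case
  proof (cases "x \<in> set ps")
    case False
    from ps obtain r where r: "ps = y # r" by (cases ps) (auto simp: path_def)
    show ?thesis using False ps 3 r by (intro exI[of _ "x # ps"]) (auto simp: path_def)
  next
    case True
    then obtain k where k: "k < length ps" "ps ! k = x" by (meson in_set_conv_nth)
    have "path F (drop k ps)" using ps k by (auto simp: path_def walk_drop)
    moreover have "hd (drop k ps) = x" using k by (simp add: hd_drop_conv_nth)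
    moreover have "last (drop k ps) = last ps" using k by simp
    ultimately show ?thesis using ps by (intro exI[of _ "drop k ps"]) simp
  qed
qed

lemma MP_unique:
  assumes A: "A \<in> carrier_mat n n" and X: "is_MP_inverse A X" and Y: "is_MP_inverse A Y"
  shows "X = Y"
proof -
  have Xc: "X \<in> carrier_mat n n" and Yc: "Y \<in> carrier_mat n n" using A X Y by (auto simp: is_MP_inverse_def)
  note XX = X[unfolded is_MP_inverse_def] and YY = Y[unfolded is_MP_inverse_def]
  have as: "\<And>(P::real mat) R S. P \<in> carrier_mat n n \<Longrightarrow> R \<in> carrier_mat n n \<Longrightarrow> S \<in> carrier_mat n n \<Longrightarrow> P * R * S = P * (R * S)"
    by (rule assoc_mult_mat)
  have mc: "\<And>(P::real mat) R. P \<in> carrier_mat n n \<Longrightarrow> R \<in> carrier_mat n n \<Longrightarrow> P * R \<in> carrier_mat n n" by auto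
  have At: "transpose_mat A \<in> carrier_mat n n" "transpose_mat X \<in> carrier_mat n n" "transpose_mat Y \<in> carrier_mat n n"
    using A Xc Yc by auto
  note cs = A Xc Yc At
  have tr: "\<And>(P::real mat) R. P \<in> carrier_mat n n \<Longrightarrow> R \<in> carrier_mat n n \<Longrightarrow> transpose_mat (P * R) = transpose_mat R * transpose_mat P"
    by (rule transpose_mult)
  have tA: "transpose_mat A = transpose_mat A * transpose_mat Y * transpose_mat A"
  proof -
    have "transpose_mat A = transpose_mat (A * Y * A)" using YY by simp
    also have "\<dots> = transpose_mat A * transpose_mat Y * transpose_mat A"
      by (simp only: tr mc cs as)
    finally show ?thesis .
  qed
  have tA2: "transpose_mat A = transpose_mat A * transpose_mat X * transpose_mat A"
  proof -
    have "transpose_mat A = transpose_mat (A * X * A)" using XX by simp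
    also have "\<dots> = transpose_mat A * transpose_mat X * transpose_mat A"
      by (simp only: tr mc cs as)
    finally show ?thesis .
  qed
  have AX: "transpose_mat X * transpose_mat A = A * X"
    using tr[OF A Xc] XX by simp
  have AY: "transpose_mat Y * transpose_mat A = A * Y"
    using tr[OF A Yc] YY by simp
  have XA: "transpose_mat A * transpose_mat X = X * A"
    using tr[OF Xc A] XX by simp
  have YA: "transpose_mat A * transpose_mat Y = Y * A"
    using tr[OF Yc A] YY by simp
  have "X = X * A * X" using XX by simp
  also have "\<dots> = X * (transpose_mat X * transpose_mat A)" using AX by (simp only: as cs)
  also have "\<dots> = X * (transpose_mat X * (transpose_mat A * transpose_mat Y * transpose_mat A))"
    using tA by simp
  also have "\<dots> = X * ((transpose_mat X * transpose_mat A) * (transpose_mat Y * transpose_mat A))"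
    by (simp only: as mc cs)
  also have "\<dots> = X * (A * X * (A * Y))" using AX AY by simp
  also have "\<dots> = X * ((A * X * A) * Y)" by (simp only: as mc cs)
  also have "\<dots> = X * A * Y" using XX by (simp only: as mc cs)
  finally have 1: "X = X * A * Y" .
  have "Y = Y * A * Y" using YY by simp
  also have "\<dots> = (transpose_mat A * transpose_mat Y) * Y" using YA by simp
  also have "\<dots> = ((transpose_mat A * transpose_mat X * transpose_mat A) * transpose_mat Y) * Y"
    using tA2 by simp
  also have "\<dots> = ((transpose_mat A * transpose_mat X) * (transpose_mat A * transpose_mat Y)) * Y"
    by (simp only: as mc cs)
  also have "\<dots> = (X * A * (Y * A)) * Y" using XA YA by simp
  also have "\<dots> = X * (A * Y * A) * Y" by (simp only: as mc cs)
  also have "\<dots> = X * A * Y" using YY by simp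
  finally have 2: "Y = X * A * Y" .
  show ?thesis using 1 2 by simp
qed

locale treeG =
  fixes n :: nat and E :: "nat set set"
  assumes tree: "is_tree {1..n} E"
begin

lemma sg: "simple_graph {1..n} E" using tree by (simp add: is_tree_def)

lemma edgeE: "e \<in> E \<Longrightarrow> \<exists>u v. e = {u, v} \<and> u \<noteq> v \<and> u \<in> {1..n} \<and> v \<in> {1..n}"
  using sg by (simp add: simple_graph_def)

lemma finE: "finite E"
proof -
  have "E \<subseteq> Pow {1..n}" using edgeE by blast
  then show ?thesis by (rule finite_subset) simp
qed

lemma conn: "u \<in> {1..n} \<Longrightarrow> v \<in> {1..n} \<Longrightarrow> reach E u v"
  using tree by (auto simp: is_tree_def connected_on_def reach_def)

lemma nocycle: "\<not> is_cycle E xs"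
  using tree by (auto simp: is_tree_def)

lemma edge_other: "e \<in> E \<Longrightarrow> u \<in> e \<Longrightarrow> \<exists>v. e = {u, v} \<and> u \<noteq> v \<and> u \<in> {1..n} \<and> v \<in> {1..n}"
  using edgeE by blast

lemma L2a:
  assumes e: "e \<in> E" "e = {u, v}" "u \<noteq> v"
  shows "\<not> reach (E - {e}) u v"
proof
  assume "reach (E - {e}) u v"
  then obtain xs where "walk (E - {e}) xs" "hd xs = u" "last xs = v" unfolding reach_def by blast
  then obtain ps where ps: "path (E - {e}) ps" "hd ps = u" "last ps = v" using walk_to_path by blast
  have pw: "walk (E - {e}) ps" "distinct ps" using ps by (auto simp: path_def)
  have "ps \<noteq> []" using pw by auto
  show False
  proof (cases "length ps \<le> 2")
    case True
    then consider "ps = [u]" | "ps = [u, v]" using ps \<open>ps \<noteq> []\<close>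
      by (cases ps; cases "tl ps"; auto)
    then show False
    proof cases
      case 1 then show False using ps e by auto
    next
      case 2 then show False using pw e by auto
    qed
  next
    case False
    have "walk E ps" using pw walk_mono by blast
    then have "walk E (ps @ [u])" using ps e by (intro walk_snoc) (auto simp: insert_commute)
    moreover have "hd (ps @ [u]) = last (ps @ [u])" using ps \<open>ps \<noteq> []\<close> by simp
    moreover have "distinct (butlast (ps @ [u]))" using pw by simp
    moreover have "length (ps @ [u]) \<ge> 4" using False by simp
    ultimately have "is_cycle E (ps @ [u])" by (simp add: is_cycle_def)
    then show False using nocycle by blast
  qed
qed

lemma L2b_aux:
  assumes e: "e = {u, v}"
  shows "walk E xs \<Longrightarrow> reach (E - {e}) u (hd xs) \<or> reach (E - {e}) v (hd xs) \<Longrightarrow>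
    reach (E - {e}) u (last xs) \<or> reach (E - {e}) v (last xs)"
proof (induction xs rule: induct_list012)
  case (3 x y zs)
  have "reach (E - {e}) u y \<or> reach (E - {e}) v y"
  proof (cases "{x, y} = e")
    case True
    then have "y = u \<or> y = v" using e by (metis doubleton_eq_iff insertI1 insert_commute insert_iff)
    then show ?thesis using reach_refl by metis
  next
    case False
    then have "reach (E - {e}) x y" using 3 by (intro reach_edge) auto
    then show ?thesis using 3 reach_trans by (metis list.sel(1))
  qed
  then show ?case using 3 by simp
qed auto

lemma L2b:
  assumes e: "e \<in> E" "e = {u, v}" and w: "w \<in> {1..n}"
  shows "reach (E - {e}) u w \<or> reach (E - {e}) v w"
proof -
  have "u \<in> {1..n}" using edge_other[of e u] e by auto
  then obtain xs where "walk E xs" "hd xs = u" "last xs = w" using conn[OF _ w] unfolding reach_def by blast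
  then show ?thesis using L2b_aux[OF e(2), of xs] reach_refl by metis
qed

lemma edge_MinMax:
  assumes "e \<in> E"
  shows "e = {Min e, Max e}" "Min e < Max e" "Min e \<in> {1..n}" "Max e \<in> {1..n}"
proof -
  obtain u v where uv: "e = {u, v}" "u \<noteq> v" "u \<in> {1..n}" "v \<in> {1..n}" using edgeE assms by blast
  have "Min e = min u v" "Max e = max u v" using uv by auto
  then show "e = {Min e, Max e}" "Min e < Max e" "Min e \<in> {1..n}" "Max e \<in> {1..n}"
    using uv by (auto simp: min_def max_def)
qed

definition Hd :: "nat set \<Rightarrow> nat set" where "Hd e = head_comp {1..n} E e"
definition Tl :: "nat set \<Rightarrow> nat set" where "Tl e = tail_comp {1..n} E e"

lemma component_eq: "component V F v = {u \<in> V. reach F v u}"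
  by (simp add: component_def reach_def)

lemma Hd_eq: "Hd e = {w \<in> {1..n}. reach (E - {e}) (Max e) w}"
  by (simp add: Hd_def head_comp_def component_eq)
lemma Tl_eq: "Tl e = {w \<in> {1..n}. reach (E - {e}) (Min e) w}"
  by (simp add: Tl_def tail_comp_def component_eq)

lemma HT_disj:
  assumes e: "e \<in> E" shows "Hd e \<inter> Tl e = {}"
proof (rule ccontr)
  assume "Hd e \<inter> Tl e \<noteq> {}"
  then obtain w where "reach (E - {e}) (Max e) w" "reach (E - {e}) (Min e) w"
    unfolding Hd_eq Tl_eq by blast
  then have "reach (E - {e}) (Min e) (Max e)" using reach_sym reach_trans by metis
  moreover have "\<not> reach (E - {e}) (Min e) (Max e)"
    using L2a[OF e edge_MinMax(1)[OF e]] edge_MinMax(2)[OF e] by simp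
  ultimately show False by simp
qed

lemma HT_union:
  assumes e: "e \<in> E" shows "Hd e \<union> Tl e = {1..n}"
proof
  show "Hd e \<union> Tl e \<subseteq> {1..n}" unfolding Hd_eq Tl_eq by auto
  show "{1..n} \<subseteq> Hd e \<union> Tl e"
  proof
    fix w assume w: "w \<in> {1..n}"
    have "reach (E - {e}) (Min e) w \<or> reach (E - {e}) (Max e) w"
      using L2b[OF e edge_MinMax(1)[OF e] w] .
    then show "w \<in> Hd e \<union> Tl e" using w unfolding Hd_eq Tl_eq by auto
  qed
qed

lemma HT_card: "e \<in> E \<Longrightarrow> card (Hd e) + card (Tl e) = n"
  using card_Un_disjoint[of "Hd e" "Tl e"] HT_disj HT_union
  by (metis card_atLeastAtMost diff_Suc_1 finite_Un finite_atLeastAtMost)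

lemma Max_in_Hd: "e \<in> E \<Longrightarrow> Max e \<in> Hd e"
  using edge_MinMax reach_refl unfolding Hd_eq by blast
lemma Min_in_Tl: "e \<in> E \<Longrightarrow> Min e \<in> Tl e"
  using edge_MinMax reach_refl unfolding Tl_eq by blast

lemma sameside:
  assumes e: "e \<in> E" and ab: "a \<in> {1..n}" "b \<in> {1..n}"
  shows "reach (E - {e}) a b \<longleftrightarrow> (a \<in> Hd e \<longleftrightarrow> b \<in> Hd e)"
proof
  assume r: "reach (E - {e}) a b"
  have 1: "reach (E - {e}) (Max e) a \<Longrightarrow> reach (E - {e}) (Max e) b" using r reach_trans by metis
  have 2: "reach (E - {e}) (Max e) b \<Longrightarrow> reach (E - {e}) (Max e) a" using r reach_trans reach_sym by metis
  show "a \<in> Hd e \<longleftrightarrow> b \<in> Hd e" using 1 2 ab unfolding Hd_eq by auto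
next
  assume s: "a \<in> Hd e \<longleftrightarrow> b \<in> Hd e"
  have "a \<in> Hd e \<union> Tl e" "b \<in> Hd e \<union> Tl e" using HT_union e ab by auto
  then consider "a \<in> Hd e" "b \<in> Hd e" | "a \<in> Tl e" "b \<in> Tl e"
    using s HT_disj[OF e] by blast
  then show "reach (E - {e}) a b"
  proof cases
    case 1
    then have "reach (E - {e}) (Max e) a" "reach (E - {e}) (Max e) b" unfolding Hd_eq by auto
    then show ?thesis using reach_sym reach_trans by metis
  next
    case 2
    then have "reach (E - {e}) (Min e) a" "reach (E - {e}) (Min e) b" unfolding Tl_eq by auto
    then show ?thesis using reach_sym reach_trans by metis
  qed
qed

end

context treeG begin

definition s :: "nat \<Rightarrow> real" where "s v = (-1) ^ card {e \<in> E. v \<in> Hd e}"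

lemma s_sq: "s v * s v = 1"
  by (simp add: s_def flip: power_mult_distrib)

lemma s_edge:
  assumes f: "f \<in> E" shows "s (Max f) = - s (Min f)"
proof -
  note mm = edge_MinMax[OF f]
  have eq: "Min f \<in> Hd e \<longleftrightarrow> Max f \<in> Hd e" if e: "e \<in> E" "e \<noteq> f" for e
  proof -
    have "{Min f, Max f} \<in> E - {e}" using f e mm(1) by auto
    then have "reach (E - {e}) (Min f) (Max f)" by (rule reach_edge)
    then show ?thesis using sameside[OF e(1) mm(3) mm(4)] by simp
  qed
  have nA: "Min f \<notin> Hd f" using Min_in_Tl[OF f] HT_disj[OF f] by blast
  have inB: "Max f \<in> Hd f" using Max_in_Hd[OF f] .
  define A where "A = {e \<in> E. Min f \<in> Hd e}"
  have A: "{e \<in> E. Max f \<in> Hd e} = insert f A" using eq nA inB f unfolding A_def by blast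
  have fA: "f \<notin> A" "finite A" using nA finE unfolding A_def by auto
  have "card {e \<in> E. Max f \<in> Hd e} = Suc (card A)" using A fA by simp
  then show ?thesis unfolding s_def A_def by simp
qed

lemma s_adj:
  assumes "{x, y} \<in> E" shows "s y = - s x"
proof -
  let ?f = "{x, y}"
  note mm = edge_MinMax[OF assms]
  have "x \<noteq> y" using mm by auto
  then have "(x = Min ?f \<and> y = Max ?f) \<or> (x = Max ?f \<and> y = Min ?f)"
    by (cases "x < y") (auto simp: min_def max_def)
  then show ?thesis using s_edge[OF assms] by auto
qed

lemma s_walk: "walk E xs \<Longrightarrow> s (last xs) = (-1) ^ (length xs - 1) * s (hd xs)"
proof (induction xs rule: induct_list012)
  case (3 x y zs)
  then have "s (last (y # zs)) = (-1) ^ (length zs) * s y" "s y = - s x"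
    using s_adj by auto
  then show ?case by simp
qed auto

lemma gdist_sign:
  assumes i: "i \<in> {1..n}" and j: "j \<in> {1..n}"
  shows "(-1) ^ gdist E i j = s i * s j"
proof -
  obtain xs where xs: "walk E xs" "hd xs = i" "last xs = j" using conn[OF i j] unfolding reach_def by blast
  then have "\<exists>k xs. walk E xs \<and> hd xs = i \<and> last xs = j \<and> length xs = Suc k"
    by (intro exI[of _ "length xs - 1"] exI[of _ xs]) (cases xs; auto)
  then have "\<exists>xs. walk E xs \<and> hd xs = i \<and> last xs = j \<and> length xs = Suc (gdist E i j)"
    unfolding gdist_def by (rule LeastI_ex)
  then obtain ys where ys: "walk E ys" "hd ys = i" "last ys = j" "length ys = Suc (gdist E i j)" by blast
  have "s j = (-1) ^ gdist E i j * s i" using s_walk[OF ys(1)] ys by simp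
  then have "s i * s j = (-1) ^ gdist E i j * (s i * s i)" by simp
  then show ?thesis using s_sq by simp
qed


end

context treeG begin

lemma c_uniq:
  assumes e1: "e1 \<in> E" and e2: "e2 \<in> E" and i1: "i \<in> e1" and i2: "i \<in> e2" and j: "j \<in> {1..n}"
    and n1: "\<not> reach (E - {e1}) i j" and n2: "\<not> reach (E - {e2}) i j"
  shows "e1 = e2"
proof (rule ccontr)
  assume ne: "e1 \<noteq> e2"
  obtain x where x: "e1 = {i, x}" using edge_other[OF e1 i1] by blast
  obtain y where y: "e2 = {i, y}" using edge_other[OF e2 i2] by blast
  have ryj: "reach (E - {e2}) y j" using L2b[OF e2 y j] n2 by blast
  have rix: "reach (E - {e2}) i x" using e1 ne x by (intro reach_edge) auto
  have nxj: "\<not> reach (E - {e2}) x j" using rix n2 reach_trans by blast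
  have riy: "reach (E - {e1}) i y" using e2 ne y by (intro reach_edge) auto
  obtain ws where ws: "walk (E - {e2}) ws" "hd ws = y" "last ws = j" using ryj unfolding reach_def by blast
  show False
  proof (cases "\<exists>k. Suc k < length ws \<and> {ws ! k, ws ! Suc k} = e1")
    case True
    then obtain k where k: "Suc k < length ws" "{ws ! k, ws ! Suc k} = e1" by blast
    then have "x \<in> {ws ! k, ws ! Suc k}" using x by auto
    then obtain t where t: "t < length ws" "ws ! t = x" using k(1)
      by (metis Suc_lessD insert_iff singletonD)
    have "walk (E - {e2}) (drop t ws)" using walk_drop[OF ws(1) t(1)] .
    moreover have "hd (drop t ws) = x" using t by (simp add: hd_drop_conv_nth)
    moreover have "last (drop t ws) = j" using t ws by simp
    ultimately have "reach (E - {e2}) x j" unfolding reach_def by blast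
    then show False using nxj by simp
  next
    case False
    then have "walk (E - {e1}) ws" using ws(1) unfolding walk_def by blast
    then have "reach (E - {e1}) y j" using ws unfolding reach_def by blast
    then show False using riy n1 reach_trans by blast
  qed
qed


end

context treeG begin

lemma pair_idx:
  assumes "distinct xs" "Suc a < length xs" "Suc k < length xs"
    "{xs ! a, xs ! Suc a} = {xs ! k, xs ! Suc k}"
  shows "a = k"
proof -
  from assms(4) have "(xs ! a = xs ! k \<and> xs ! Suc a = xs ! Suc k) \<or> (xs ! a = xs ! Suc k \<and> xs ! Suc a = xs ! k)"
    by (simp add: doubleton_eq_iff)
  then show ?thesis using assms(1-3) by (auto simp: nth_eq_iff_index_eq)
qed

lemma L4:
  assumes p: "path E xs" and hx: "hd xs = i" "last xs = j"
  shows "{{xs ! k, xs ! Suc k} | k. Suc k < length xs} = {e \<in> E. \<not> reach (E - {e}) i j}"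
proof -
  have w: "walk E xs" and d: "distinct xs" using p by (auto simp: path_def)
  have ne: "xs \<noteq> []" using w by auto
  show ?thesis
  proof (intro equalityI subsetI)
    fix e assume "e \<in> {{xs ! k, xs ! Suc k} | k. Suc k < length xs}"
    then obtain k where k: "Suc k < length xs" "e = {xs ! k, xs ! Suc k}" by blast
    have eE: "e \<in> E" using w k unfolding walk_def by auto
    have pre: "walk (E - {e}) (take (Suc k) xs)"
      unfolding walk_def
    proof (intro conjI allI impI)
      fix t assume t: "Suc t < length (take (Suc k) xs)"
      then have "Suc t < Suc k" "Suc t < length xs" by auto
      then have "{xs ! t, xs ! Suc t} \<noteq> e" using pair_idx[OF d _ k(1)] k(2) by fastforce
      moreover have "{xs ! t, xs ! Suc t} \<in> E" using w \<open>Suc t < length xs\<close> unfolding walk_def by auto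
      ultimately show "{take (Suc k) xs ! t, take (Suc k) xs ! Suc t} \<in> E - {e}"
        using \<open>Suc t < Suc k\<close> by simp
    qed (use ne in simp)
    have h1: "hd (take (Suc k) xs) = i" using hx ne by (cases xs) auto
    have h2: "last (take (Suc k) xs) = xs ! k" using k by (simp add: take_Suc_conv_app_nth)
    have r1: "reach (E - {e}) i (xs ! k)"
      using pre h1 h2 unfolding reach_def by blast
    have suf: "walk (E - {e}) (drop (Suc k) xs)"
      unfolding walk_def
    proof (intro conjI allI impI)
      fix t assume t: "Suc t < length (drop (Suc k) xs)"
      then have t2: "Suc (Suc k + t) < length xs" by auto
      then have "{xs ! (Suc k + t), xs ! Suc (Suc k + t)} \<noteq> e" using pair_idx[OF d _ k(1)] k(2) by fastforce
      moreover have "{xs ! (Suc k + t), xs ! Suc (Suc k + t)} \<in> E" using w t2 unfolding walk_def by auto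
      ultimately show "{drop (Suc k) xs ! t, drop (Suc k) xs ! Suc t} \<in> E - {e}"
        using t2 by simp
    qed (use k in simp)
    have r2: "reach (E - {e}) (xs ! Suc k) j"
      using suf hx k unfolding reach_def
      by (intro exI[of _ "drop (Suc k) xs"]) (auto simp: hd_drop_conv_nth)
    have "xs ! k \<noteq> xs ! Suc k" using d k by (simp add: nth_eq_iff_index_eq)
    then have nr: "\<not> reach (E - {e}) (xs ! k) (xs ! Suc k)" using L2a[OF eE k(2)] by simp
    have "\<not> reach (E - {e}) i j"
    proof
      assume "reach (E - {e}) i j"
      then have "reach (E - {e}) (xs ! k) (xs ! Suc k)" using r1 r2 reach_sym reach_trans by metis
      then show False using nr by simp
    qed
    then show "e \<in> {e \<in> E. \<not> reach (E - {e}) i j}" using eE by simp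
  next
    fix e assume e: "e \<in> {e \<in> E. \<not> reach (E - {e}) i j}"
    show "e \<in> {{xs ! k, xs ! Suc k} | k. Suc k < length xs}"
    proof (rule ccontr)
      assume "e \<notin> {{xs ! k, xs ! Suc k} | k. Suc k < length xs}"
      then have "walk (E - {e}) xs" using w unfolding walk_def by blast
      then have "reach (E - {e}) i j" using hx unfolding reach_def by blast
      then show False using e by simp
    qed
  qed
qed


end

context treeG begin

lemma path_tl: "path F (x # y # zs) \<Longrightarrow> path F (y # zs)"
  by (simp add: path_def)

lemma path_hd_last: "path F (x # r) \<Longrightarrow> last (x # r) = x \<Longrightarrow> r = []"
proof (rule ccontr)
  assume p: "path F (x # r)" and l: "last (x # r) = x" and r: "r \<noteq> []"
  then have "last r = x" by simp
  then have "x \<in> set r" using r last_in_set by metis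
  then show False using p by (simp add: path_def)
qed

lemma path_unique:
  "path E xs \<Longrightarrow> path E ys \<Longrightarrow> hd xs = hd ys \<Longrightarrow> last xs = last ys \<Longrightarrow> last xs \<in> {1..n} \<Longrightarrow> xs = ys"
proof (induction xs arbitrary: ys rule: induct_list012)
  case 1 then show ?case by (simp add: path_def)
next
  case (2 x)
  obtain y r where ys: "ys = y # r" using "2.prems"(2) by (cases ys) (auto simp: path_def)
  have "y = x" using "2.prems"(3) ys by simp
  have l: "last (y # r) = y" using "2.prems"(4) ys \<open>y = x\<close> by simp
  have p: "path E (y # r)" using "2.prems"(2) ys by simp
  have "r = []" using path_hd_last[OF p l] .
  then show ?case using ys \<open>y = x\<close> by simp
next
  case (3 x y zs)
  let ?j = "last (y # zs)"
  have dx: "x \<notin> set (y # zs)" using "3.prems"(1) by (simp add: path_def)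
  have xj: "x \<noteq> ?j" using dx last_in_set by (metis list.distinct(1))
  obtain a r where ys0: "ys = a # r" using "3.prems"(2) by (cases ys) (auto simp: path_def)
  have a: "a = x" using "3.prems"(3) ys0 by simp
  have lys: "last ys = ?j" using "3.prems"(4) by simp
  have "r \<noteq> []" using lys ys0 a xj by auto
  then obtain y' zs' where "r = y' # zs'" by (cases r) auto
  then have ys: "ys = x # y' # zs'" using ys0 a by simp
  have j: "?j \<in> {1..n}" using "3.prems"(5) by (metis last_ConsR list.distinct(1))
  have L1: "{{(x # y # zs) ! k, (x # y # zs) ! Suc k} | k. Suc k < length (x # y # zs)} = {e \<in> E. \<not> reach (E - {e}) x ?j}"
    by (rule L4[OF "3.prems"(1)]) simp_all
  have m1: "{x, y} \<in> {{(x # y # zs) ! k, (x # y # zs) ! Suc k} | k. Suc k < length (x # y # zs)}"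
    by (rule CollectI, rule exI[of _ 0]) simp
  have e1: "{x, y} \<in> E" "\<not> reach (E - {{x, y}}) x ?j"
    using m1[unfolded L1] by simp_all
  have hys: "hd ys = x" using ys by simp
  have L2: "{{ys ! k, ys ! Suc k} | k. Suc k < length ys} = {e \<in> E. \<not> reach (E - {e}) x ?j}"
    using L4[OF "3.prems"(2) hys lys] .
  have m2: "{x, y'} \<in> {{ys ! k, ys ! Suc k} | k. Suc k < length ys}"
    by (rule CollectI, rule exI[of _ 0]) (simp add: ys)
  have e2: "{x, y'} \<in> E" "\<not> reach (E - {{x, y'}}) x ?j"
    using m2[unfolded L2] by simp_all
  have "{x, y} = {x, y'}" using c_uniq[OF e1(1) e2(1) _ _ j e1(2) e2(2)] by simp
  moreover have "x \<noteq> y" using dx by simp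
  ultimately have yy: "y = y'" by (metis doubleton_eq_iff)
  have p1: "path E (y # zs)" using path_tl[OF "3.prems"(1)] .
  have p2: "path E (y' # zs')" using path_tl[of E x y' zs'] "3.prems"(2) ys by simp
  have l2: "last (y # zs) = last (y' # zs')" using lys ys by simp
  have "y # zs = y' # zs'"
    using "3.IH"(2)[OF p1 p2 _ l2 j] yy by simp
  then show ?case using ys by simp
qed

lemma path_edges_eq:
  assumes i: "i \<in> {1..n}" and j: "j \<in> {1..n}"
  shows "path_edges E i j = {e \<in> E. \<not> reach (E - {e}) i j}"
proof -
  obtain xs where "walk E xs" "hd xs = i" "last xs = j" using conn[OF i j] unfolding reach_def by blast
  then obtain ps where ps: "path E ps" "hd ps = i" "last ps = j" using walk_to_path by metis
  have "(THE xs. path E xs \<and> hd xs = i \<and> last xs = j) = ps"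
  proof (rule the_equality)
    show "path E ps \<and> hd ps = i \<and> last ps = j" using ps by simp
    fix xs assume "path E xs \<and> hd xs = i \<and> last xs = j"
    then show "xs = ps" using path_unique[of xs ps] ps j by simp
  qed
  then show ?thesis unfolding path_edges_def Let_def using L4[OF ps] by simp
qed

end

context treeG begin

definition w :: "nat set \<Rightarrow> nat \<Rightarrow> real" where
  "w e v = (if v \<in> Hd e then real (card (Tl e)) else - real (card (Hd e)))"
definition bf :: "nat set \<Rightarrow> nat \<Rightarrow> real" where
  "bf e u = (if u = Max e then 1 else if u = Min e then -1 else 0)"
definition far :: "nat \<Rightarrow> nat set \<Rightarrow> nat set" where
  "far a e = {v \<in> {1..n}. \<not> reach (E - {e}) a v}"

lemma Hd_sub: "Hd e \<subseteq> {1..n}" unfolding Hd_eq by auto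
lemma Tl_sub: "Tl e \<subseteq> {1..n}" unfolding Tl_eq by auto

lemma far_Max: assumes e: "e \<in> E" shows "far (Max e) e = Tl e"
proof -
  have "v \<in> far (Max e) e \<longleftrightarrow> v \<in> Tl e" for v
  proof -
    have "v \<in> far (Max e) e \<longleftrightarrow> v \<in> {1..n} \<and> v \<notin> Hd e" unfolding far_def Hd_eq by auto
    also have "\<dots> \<longleftrightarrow> v \<in> Tl e" using HT_union[OF e] HT_disj[OF e] Tl_sub by blast
    finally show ?thesis .
  qed
  then show ?thesis by blast
qed

lemma far_Min: assumes e: "e \<in> E" shows "far (Min e) e = Hd e"
proof -
  have "v \<in> far (Min e) e \<longleftrightarrow> v \<in> Hd e" for v
  proof -
    have "v \<in> far (Min e) e \<longleftrightarrow> v \<in> {1..n} \<and> v \<notin> Tl e" unfolding far_def Tl_eq by auto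
    also have "\<dots> \<longleftrightarrow> v \<in> Hd e" using HT_union[OF e] HT_disj[OF e] Hd_sub by blast
    finally show ?thesis .
  qed
  then show ?thesis by blast
qed

lemma HT_card': "e \<in> E \<Longrightarrow> real (card (Hd e)) = real n - real (card (Tl e))"
  using HT_card by (metis add_diff_cancel_right' of_nat_add)

lemma bw_far:
  assumes e: "e \<in> E" and a: "a \<in> e" and b: "b \<in> {1..n}"
  shows "bf e a * w e b = real (card (far a e)) - (if b \<in> far a e then real n else 0)"
proof -
  note mm = edge_MinMax[OF e]
  have "a = Max e \<or> a = Min e" using a mm(1) by blast
  then show ?thesis
  proof
    assume am: "a = Max e"
    then have "bf e a = 1" by (simp add: bf_def)
    moreover have "far a e = Tl e" using far_Max[OF e] am by simp
    moreover have "b \<in> Tl e \<longleftrightarrow> b \<notin> Hd e" using HT_union[OF e] HT_disj[OF e] Tl_sub b by blast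
    ultimately show ?thesis using HT_card'[OF e] unfolding w_def
      by (cases "b \<in> Hd e") simp_all
  next
    assume am: "a = Min e"
    then have "bf e a = -1" using mm(2) by (simp add: bf_def)
    moreover have "far a e = Hd e" using far_Min[OF e] am by simp
    ultimately show ?thesis using HT_card'[OF e] unfolding w_def
      by (cases "b \<in> Hd e") simp_all
  qed
qed

lemma bf_zero: assumes e: "e \<in> E" and a: "a \<notin> e" shows "bf e a = 0"
proof -
  note mm = edge_MinMax[OF e]
  have "a \<noteq> Max e" "a \<noteq> Min e" using a mm(1) by (metis insertI1 insert_commute)+
  then show ?thesis by (simp add: bf_def)
qed

lemma c_exists:
  assumes a: "a \<in> {1..n}" and v: "v \<in> {1..n}" and av: "a \<noteq> v"
  shows "\<exists>e \<in> E. a \<in> e \<and> \<not> reach (E - {e}) a v"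
proof -
  obtain xs where "walk E xs" "hd xs = a" "last xs = v" using conn[OF a v] unfolding reach_def by blast
  then obtain ps where ps: "path E ps" "hd ps = a" "last ps = v" using walk_to_path by metis
  have L: "{{ps ! k, ps ! Suc k} | k. Suc k < length ps} = {e \<in> E. \<not> reach (E - {e}) a v}"
    using L4[OF ps] .
  obtain x r where pr: "ps = x # r" using ps by (cases ps) (auto simp: path_def)
  have "r \<noteq> []" using pr ps av by auto
  then obtain y r' where pr2: "ps = a # y # r'" using pr ps by (cases r) auto
  have "{a, y} \<in> {{ps ! k, ps ! Suc k} | k. Suc k < length ps}"
    by (rule CollectI, rule exI[of _ 0]) (simp add: pr2)
  then have "{a, y} \<in> E \<and> \<not> reach (E - {{a, y}}) a v" using L by simp
  then show ?thesis by blast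
qed

lemma far_cover:
  assumes a: "a \<in> {1..n}"
  shows "(\<Union>e\<in>{e \<in> E. a \<in> e}. far a e) = {1..n} - {a}"
proof
  show "(\<Union>e\<in>{e \<in> E. a \<in> e}. far a e) \<subseteq> {1..n} - {a}"
    unfolding far_def using reach_refl by blast
  show "{1..n} - {a} \<subseteq> (\<Union>e\<in>{e \<in> E. a \<in> e}. far a e)"
  proof
    fix v assume v: "v \<in> {1..n} - {a}"
    then obtain e where "e \<in> E" "a \<in> e" "\<not> reach (E - {e}) a v" using c_exists[OF a, of v] by auto
    then show "v \<in> (\<Union>e\<in>{e \<in> E. a \<in> e}. far a e)" using v unfolding far_def by auto
  qed
qed

lemma far_disj:
  assumes a: "a \<in> {1..n}" and e1: "e1 \<in> E" "a \<in> e1" and e2: "e2 \<in> E" "a \<in> e2" and ne: "e1 \<noteq> e2"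
  shows "far a e1 \<inter> far a e2 = {}"
  using c_uniq[OF e1(1) e2(1) e1(2) e2(2)] ne unfolding far_def by blast

lemma sum_card_far:
  assumes a: "a \<in> {1..n}"
  shows "(\<Sum>e\<in>{e \<in> E. a \<in> e}. real (card (far a e))) = real n - 1"
proof -
  have fin: "finite {e \<in> E. a \<in> e}" using finE by simp
  have "card (\<Union>e\<in>{e \<in> E. a \<in> e}. far a e) = (\<Sum>e\<in>{e \<in> E. a \<in> e}. card (far a e))"
  proof (rule card_UN_disjoint[OF fin])
    show "\<forall>e\<in>{e \<in> E. a \<in> e}. finite (far a e)" unfolding far_def by simp
    show "\<forall>e1\<in>{e \<in> E. a \<in> e}. \<forall>e2\<in>{e \<in> E. a \<in> e}. e1 \<noteq> e2 \<longrightarrow> far a e1 \<inter> far a e2 = {}"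
    proof (intro ballI impI)
      fix e1 e2 assume "e1 \<in> {e \<in> E. a \<in> e}" "e2 \<in> {e \<in> E. a \<in> e}" "e1 \<noteq> e2"
      then show "far a e1 \<inter> far a e2 = {}" using far_disj[OF a] by simp
    qed
  qed
  then have "(\<Sum>e\<in>{e \<in> E. a \<in> e}. card (far a e)) = card ({1..n} - {a})"
    using far_cover[OF a] by simp
  also have "\<dots> = n - 1" using a by simp
  finally have "real (\<Sum>e\<in>{e \<in> E. a \<in> e}. card (far a e)) = real (n - 1)" by simp
  then show ?thesis using a by (simp add: of_nat_diff)
qed

lemma card_far_b:
  assumes a: "a \<in> {1..n}" and b: "b \<in> {1..n}"
  shows "card {e \<in> {e \<in> E. a \<in> e}. b \<in> far a e} = (if a = b then 0 else 1)"
proof (cases "a = b")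
  case True
  then have "{e \<in> {e \<in> E. a \<in> e}. b \<in> far a e} = {}" unfolding far_def using reach_refl by blast
  then have "card {e \<in> {e \<in> E. a \<in> e}. b \<in> far a e} = 0" by (simp only: card.empty)
  then show ?thesis using True by simp
next
  case False
  then obtain e0 where e0: "e0 \<in> E" "a \<in> e0" "\<not> reach (E - {e0}) a b" using c_exists[OF a b False] by blast
  have "{e \<in> {e \<in> E. a \<in> e}. b \<in> far a e} = {e0}"
  proof (intro equalityI subsetI)
    fix e assume "e \<in> {e \<in> {e \<in> E. a \<in> e}. b \<in> far a e}"
    then have ee: "e \<in> E" "a \<in> e" "\<not> reach (E - {e}) a b" unfolding far_def by auto
    then show "e \<in> {e0}" using c_uniq[OF ee(1) e0(1) ee(2) e0(2) b ee(3) e0(3)] by simp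
  next
    fix e assume "e \<in> {e0}"
    then show "e \<in> {e \<in> {e \<in> E. a \<in> e}. b \<in> far a e}" using e0 b unfolding far_def by auto
  qed
  then show ?thesis using False by simp
qed

lemma key_sum:
  assumes a: "a \<in> {1..n}" and b: "b \<in> {1..n}"
  shows "(\<Sum>e\<in>E. bf e a * w e b) = (if a = b then real n else 0) - 1"
proof -
  let ?Ea = "{e \<in> E. a \<in> e}"
  have fin: "finite ?Ea" using finE by simp
  have "(\<Sum>e\<in>E. bf e a * w e b) = (\<Sum>e\<in>E. if a \<in> e then bf e a * w e b else 0)"
    by (rule sum.cong) (simp_all add: bf_zero)
  also have "\<dots> = (\<Sum>e\<in>?Ea. bf e a * w e b)"
    using sum.inter_filter[OF finE, of "\<lambda>e. bf e a * w e b" "\<lambda>e. a \<in> e"] by simp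
  also have "\<dots> = (\<Sum>e\<in>?Ea. real (card (far a e)) - (if b \<in> far a e then real n else 0))"
    by (rule sum.cong) (auto simp: bw_far[OF _ _ b])
  also have "\<dots> = (\<Sum>e\<in>?Ea. real (card (far a e))) - (\<Sum>e\<in>?Ea. (if b \<in> far a e then real n else 0))"
    by (simp add: sum_subtractf)
  also have "(\<Sum>e\<in>?Ea. (if b \<in> far a e then real n else 0)) = (\<Sum>e\<in>{e \<in> ?Ea. b \<in> far a e}. real n)"
    using sum.inter_filter[OF fin, of "\<lambda>e. real n" "\<lambda>e. b \<in> far a e"] by simp
  also have "\<dots> = real n * real (card {e \<in> ?Ea. b \<in> far a e})" by simp
  also have "\<dots> = (if a = b then 0 else real n)" using card_far_b[OF a b] by simp
  finally show ?thesis using sum_card_far[OF a] by simp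
qed

lemma w_same:
  assumes e: "e \<in> E" and f: "f \<in> E" and ne: "f \<noteq> e"
  shows "w f (Max e) = w f (Min e)"
proof -
  note mm = edge_MinMax[OF e]
  have "{Min e, Max e} \<in> E - {f}" using e ne mm(1) by auto
  then have "reach (E - {f}) (Min e) (Max e)" by (rule reach_edge)
  then have "Min e \<in> Hd f \<longleftrightarrow> Max e \<in> Hd f" using sameside[OF f mm(3) mm(4)] by simp
  then show ?thesis unfolding w_def by simp
qed

lemma w_diff:
  assumes e: "e \<in> E" shows "w e (Max e) - w e (Min e) = real n"
proof -
  have "Max e \<in> Hd e" using Max_in_Hd[OF e] .
  moreover have "Min e \<notin> Hd e" using Min_in_Tl[OF e] HT_disj[OF e] by blast
  ultimately show ?thesis unfolding w_def using HT_card'[OF e] by simp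
qed

lemma Mdiff:
  assumes e: "e \<in> E"
  shows "(\<Sum>f\<in>E. w f b * (w f (Max e) - w f (Min e))) = real n * w e b"
proof -
  have "(\<Sum>f\<in>E. w f b * (w f (Max e) - w f (Min e))) = (\<Sum>f\<in>E. if f = e then w e b * real n else 0)"
    by (rule sum.cong) (auto simp: w_same[OF e] w_diff[OF e])
  also have "\<dots> = w e b * real n" using finE e by simp
  finally show ?thesis by simp
qed

lemma w_sum0:
  assumes e: "e \<in> E" shows "(\<Sum>v\<in>{1..n}. w e v) = 0"
proof -
  have fin: "finite (Hd e)" "finite (Tl e)" using finite_subset[OF Hd_sub] finite_subset[OF Tl_sub] by auto
  have "(\<Sum>v\<in>{1..n}. w e v) = (\<Sum>v\<in>Hd e. w e v) + (\<Sum>v\<in>Tl e. w e v)"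
    using sum.union_disjoint[OF fin HT_disj[OF e]] HT_union[OF e] by simp
  also have "(\<Sum>v\<in>Hd e. w e v) = (\<Sum>v\<in>Hd e. real (card (Tl e)))"
    by (rule sum.cong) (auto simp: w_def)
  also have "(\<Sum>v\<in>Tl e. w e v) = (\<Sum>v\<in>Tl e. - real (card (Hd e)))"
    using HT_disj[OF e] by (intro sum.cong) (auto simp: w_def)
  finally show ?thesis by simp
qed

end

lemma sum_shift1: "(\<Sum>k\<in>{0..<n}. f k) = (\<Sum>v\<in>{1..(n::nat)}. f (v - 1))"
  by (induction n) (auto simp: sum.cl_ivl_Suc)

lemma mult_entry:
  assumes A: "A \<in> carrier_mat n n" and B: "B \<in> carrier_mat n n" and a: "a < n" and b: "b < n"
  shows "(A * B) $$ (a, b) = (\<Sum>v\<in>{1..n}. A $$ (a, v - 1) * B $$ (v - 1, b))"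
proof -
  have "(A * B) $$ (a, b) = row A a \<bullet> col B b" using A B a b by simp
  also have "\<dots> = (\<Sum>k\<in>{0..<n}. A $$ (a, k) * B $$ (k, b))"
    unfolding scalar_prod_def using A B a b by (intro sum.cong) auto
  finally show ?thesis by (simp add: sum_shift1)
qed

context treeG begin

definition Qf :: "nat \<Rightarrow> nat \<Rightarrow> real" where
  "Qf u v = (\<Sum>e\<in>E. if u \<in> e \<and> v \<in> e then 1 else 0)"
definition Mf :: "nat \<Rightarrow> nat \<Rightarrow> real" where
  "Mf u v = (\<Sum>e\<in>E. w e u * w e v)"
definition Xf :: "nat \<Rightarrow> nat \<Rightarrow> real" where
  "Xf u v = s u * s v * Mf u v / (real n)^2"
definition Pf :: "nat \<Rightarrow> nat \<Rightarrow> real" where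
  "Pf u v = (if u = v then 1 else 0) - s u * s v / real n"

lemma Qf_sym: "Qf u v = Qf v u" unfolding Qf_def by (meson conj_commute)
lemma Mf_sym: "Mf u v = Mf v u" unfolding Mf_def by (simp add: mult.commute)
lemma Xf_sym: "Xf u v = Xf v u" unfolding Xf_def by (simp add: Mf_sym mult.commute)
lemma Pf_sym: "Pf u v = Pf v u" unfolding Pf_def by (simp add: mult.commute)

lemma sum_ind: "(\<Sum>e\<in>E. if P e then 1 else 0 :: real) = real (card {e \<in> E. P e})"
  using sum.inter_filter[OF finE, of "\<lambda>e. 1::real" P] by simp

lemma Qf_eq:
  assumes u: "u \<in> {1..n}" and v: "v \<in> {1..n}"
  shows "Qf u v = (if u = v then real (degree E u) else 0) + (if {u, v} \<in> E then 1 else 0)"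
proof (cases "u = v")
  case True
  have "{u} \<notin> E"
  proof
    assume "{u} \<in> E"
    then obtain x y where a: "{u} = {x, y}" "x \<noteq> y" using edgeE by blast
    then have "x \<in> {u}" "y \<in> {u}" by auto
    then show False using a(2) by simp
  qed
  then show ?thesis using True unfolding Qf_def degree_def by (simp add: sum_ind)
next
  case False
  have "{e \<in> E. u \<in> e \<and> v \<in> e} = (if {u, v} \<in> E then {{u, v}} else {})"
  proof (intro equalityI subsetI)
    fix e assume e: "e \<in> {e \<in> E. u \<in> e \<and> v \<in> e}"
    then obtain x y where "e = {x, y}" using edgeE by blast
    then have "e = {u, v}" using e False by auto
    then show "e \<in> (if {u, v} \<in> E then {{u, v}} else {})" using e by auto
  qed (auto split: if_splits)
  then show ?thesis using False unfolding Qf_def by (simp add: sum_ind)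
qed

lemma sum_edge:
  assumes e: "e \<in> E"
  shows "(\<Sum>v\<in>{1..n}. if v \<in> e then g v else 0) = g (Min e) + g (Max e)"
proof -
  note mm = edge_MinMax[OF e]
  have "(\<Sum>v\<in>{1..n}. if v \<in> e then g v else 0) = (\<Sum>v\<in>{v \<in> {1..n}. v \<in> e}. g v)"
    using sum.inter_filter[of "{1..n}" g "\<lambda>v. v \<in> e"] by simp
  also have "{v \<in> {1..n}. v \<in> e} = {Min e, Max e}"
  proof -
    obtain p q where pq: "p = Min e" "q = Max e" by blast
    have "e = {p, q}" "p \<in> {1..n}" "q \<in> {1..n}" using mm pq by auto
    then have "{v \<in> {1..n}. v \<in> e} = {p, q}" by auto
    then show ?thesis using pq by simp
  qed
  also have "(\<Sum>v\<in>{Min e, Max e}. g v) = g (Min e) + g (Max e)" using mm(2) by simp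
  finally show ?thesis .
qed

lemma s_Max_bf:
  assumes e: "e \<in> E"
  shows "(if u \<in> e then s (Max e) else 0) = s u * bf e u"
proof -
  note mm = edge_MinMax[OF e]
  show ?thesis
  proof (cases "u \<in> e")
    case True
    then have "u = Max e \<or> u = Min e" using mm(1) by blast
    then show ?thesis using True mm(2) s_edge[OF e] by (auto simp: bf_def)
  next
    case False then show ?thesis using bf_zero[OF e] by simp
  qed
qed

lemma n_pos: "u \<in> {1..n} \<Longrightarrow> real n > 0" by simp

lemma QX_entry:
  assumes u: "u \<in> {1..n}" and t: "t \<in> {1..n}"
  shows "(\<Sum>v\<in>{1..n}. Qf u v * Xf v t) = Pf u t"
proof -
  have np: "real n > 0" using u by simp
  have pair: "Xf (Min e) t + Xf (Max e) t = s t * s (Max e) * w e t / real n" if e: "e \<in> E" for e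
  proof -
    have "Mf (Max e) t - Mf (Min e) t = (\<Sum>f\<in>E. w f t * (w f (Max e) - w f (Min e)))"
      unfolding Mf_def by (simp add: sum_subtractf[symmetric] algebra_simps)
    also have "\<dots> = real n * w e t" using Mdiff[OF e] .
    finally have md: "Mf (Max e) t - Mf (Min e) t = real n * w e t" .
    have xa: "Xf v t = s t * (s v * Mf v t) / (real n)^2" for v
      unfolding Xf_def by (simp add: mult.commute mult.left_commute)
    have sm: "s (Min e) = - s (Max e)" using s_edge[OF e] by simp
    have "Xf (Min e) t + Xf (Max e) t = s t * (s (Min e) * Mf (Min e) t + s (Max e) * Mf (Max e) t) / (real n)^2"
      unfolding xa by (simp add: add_divide_distrib distrib_left)
    also have "\<dots> = s t * (s (Max e) * (Mf (Max e) t - Mf (Min e) t)) / (real n)^2"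
      unfolding sm by (simp add: right_diff_distrib)
    also have "\<dots> = s t * (s (Max e) * (real n * w e t)) / (real n)^2" unfolding md ..
    also have "\<dots> = s t * s (Max e) * w e t / real n" using np by (simp add: power2_eq_square)
    finally show ?thesis .
  qed
  have "(\<Sum>v\<in>{1..n}. Qf u v * Xf v t) = (\<Sum>v\<in>{1..n}. \<Sum>e\<in>E. if u \<in> e \<and> v \<in> e then Xf v t else 0)"
    unfolding Qf_def sum_distrib_right by (intro sum.cong refl) simp
  also have "\<dots> = (\<Sum>e\<in>E. \<Sum>v\<in>{1..n}. if u \<in> e \<and> v \<in> e then Xf v t else 0)"
    by (rule sum.swap)
  also have "\<dots> = (\<Sum>e\<in>E. s t * s u / real n * (bf e u * w e t))"
  proof (rule sum.cong[OF refl])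
    fix e assume e: "e \<in> E"
    have "(\<Sum>v\<in>{1..n}. if u \<in> e \<and> v \<in> e then Xf v t else 0)
        = (if u \<in> e then (\<Sum>v\<in>{1..n}. if v \<in> e then Xf v t else 0) else 0)"
      by simp
    also have "\<dots> = (if u \<in> e then s t * s (Max e) * w e t / real n else 0)"
      using sum_edge[OF e, of "\<lambda>v. Xf v t"] pair[OF e] by simp
    also have "\<dots> = s t * w e t / real n * (if u \<in> e then s (Max e) else 0)"
      by simp
    also have "\<dots> = s t * s u / real n * (bf e u * w e t)"
      using s_Max_bf[OF e, of u] by simp
    finally show "(\<Sum>v\<in>{1..n}. if u \<in> e \<and> v \<in> e then Xf v t else 0) = s t * s u / real n * (bf e u * w e t)" .
  qed
  also have "\<dots> = s t * s u / real n * (\<Sum>e\<in>E. bf e u * w e t)"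
    by (simp add: sum_distrib_left)
  also have "\<dots> = s t * s u / real n * ((if u = t then real n else 0) - 1)"
    using key_sum[OF u t] by simp
  also have "\<dots> = Pf u t"
    unfolding Pf_def using np s_sq[of u] by (auto simp: field_simps)
  finally show ?thesis .
qed

lemma sQ_zero:
  assumes t: "t \<in> {1..n}"
  shows "(\<Sum>v\<in>{1..n}. s v * Qf v t) = 0"
proof -
  have "(\<Sum>v\<in>{1..n}. s v * Qf v t) = (\<Sum>v\<in>{1..n}. \<Sum>e\<in>E. if v \<in> e \<and> t \<in> e then s v else 0)"
    unfolding Qf_def sum_distrib_left by (intro sum.cong refl) simp
  also have "\<dots> = (\<Sum>e\<in>E. \<Sum>v\<in>{1..n}. if v \<in> e \<and> t \<in> e then s v else 0)"
    by (rule sum.swap)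
  also have "\<dots> = (\<Sum>e\<in>E. 0)"
  proof (rule sum.cong[OF refl])
    fix e assume e: "e \<in> E"
    have "(\<Sum>v\<in>{1..n}. if v \<in> e \<and> t \<in> e then s v else 0)
        = (if t \<in> e then (\<Sum>v\<in>{1..n}. if v \<in> e then s v else 0) else 0)"
      by (simp add: conj_commute)
    also have "\<dots> = 0" using sum_edge[OF e, of s] s_edge[OF e] by simp
    finally show "(\<Sum>v\<in>{1..n}. if v \<in> e \<and> t \<in> e then s v else 0) = 0" .
  qed
  finally show ?thesis by simp
qed

lemma PQ_entry:
  assumes u: "u \<in> {1..n}" and t: "t \<in> {1..n}"
  shows "(\<Sum>v\<in>{1..n}. Pf u v * Qf v t) = Qf u t"
proof -
  have "(\<Sum>v\<in>{1..n}. Pf u v * Qf v t)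
      = (\<Sum>v\<in>{1..n}. (if u = v then Qf v t else 0) - s u / real n * (s v * Qf v t))"
    by (intro sum.cong refl) (auto simp: Pf_def algebra_simps)
  also have "\<dots> = (\<Sum>v\<in>{1..n}. (if u = v then Qf v t else 0)) - s u / real n * (\<Sum>v\<in>{1..n}. s v * Qf v t)"
    by (simp add: sum_subtractf sum_distrib_left)
  also have "\<dots> = Qf u t" using u sQ_zero[OF t] by simp
  finally show ?thesis .
qed

lemma Xs_zero:
  assumes u: "u \<in> {1..n}"
  shows "(\<Sum>v\<in>{1..n}. Xf u v * s v) = 0"
proof -
  have "(\<Sum>v\<in>{1..n}. Xf u v * s v) = (\<Sum>v\<in>{1..n}. s u / (real n)^2 * Mf u v)"
    unfolding Xf_def
  proof (rule sum.cong[OF refl])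
    fix v
    have "s u * s v * Mf u v / (real n)\<^sup>2 * s v = s u * (s v * s v) * Mf u v / (real n)\<^sup>2" by simp
    then show "s u * s v * Mf u v / (real n)\<^sup>2 * s v = s u / (real n)\<^sup>2 * Mf u v" using s_sq[of v] by simp
  qed
  also have "\<dots> = s u / (real n)^2 * (\<Sum>v\<in>{1..n}. Mf u v)" by (simp add: sum_distrib_left)
  also have "(\<Sum>v\<in>{1..n}. Mf u v) = (\<Sum>e\<in>E. w e u * (\<Sum>v\<in>{1..n}. w e v))"
    unfolding Mf_def sum_distrib_left by (rule sum.swap)
  also have "\<dots> = 0" using w_sum0 by simp
  finally show ?thesis by simp
qed

lemma XP_entry:
  assumes u: "u \<in> {1..n}" and t: "t \<in> {1..n}"
  shows "(\<Sum>v\<in>{1..n}. Xf u v * Pf v t) = Xf u t"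
proof -
  have "(\<Sum>v\<in>{1..n}. Xf u v * Pf v t)
      = (\<Sum>v\<in>{1..n}. (if v = t then Xf u v else 0) - (Xf u v * s v) * (s t / real n))"
    by (intro sum.cong refl) (auto simp: Pf_def algebra_simps)
  also have "\<dots> = (\<Sum>v\<in>{1..n}. (if v = t then Xf u v else 0)) - (\<Sum>v\<in>{1..n}. Xf u v * s v) * (s t / real n)"
    by (simp add: sum_subtractf sum_distrib_right sum_divide_distrib)
  also have "\<dots> = Xf u t" using t Xs_zero[OF u] by simp
  finally show ?thesis .
qed

end

lemma mat_prod_f:
  assumes A: "A \<in> carrier_mat n n" and B: "B \<in> carrier_mat n n"
    and fA: "\<And>a k. a < n \<Longrightarrow> k < n \<Longrightarrow> A $$ (a, k) = fA (Suc a) (Suc k)"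
    and fB: "\<And>k b. k < n \<Longrightarrow> b < n \<Longrightarrow> B $$ (k, b) = fB (Suc k) (Suc b)"
    and a: "a < n" and b: "b < n"
  shows "(A * B) $$ (a, b) = (\<Sum>v\<in>{1..n}. fA (Suc a) v * fB v (Suc b))"
proof -
  have "(A * B) $$ (a, b) = (\<Sum>v\<in>{1..n}. A $$ (a, v - 1) * B $$ (v - 1, b))"
    using mult_entry[OF A B a b] .
  also have "\<dots> = (\<Sum>v\<in>{1..n}. fA (Suc a) v * fB v (Suc b))"
  proof (rule sum.cong[OF refl])
    fix v assume v: "v \<in> {1..n}"
    then have "v - 1 < n" "Suc (v - 1) = v" by auto
    then show "A $$ (a, v - 1) * B $$ (v - 1, b) = fA (Suc a) v * fB v (Suc b)"
      using fA[OF a] fB[OF _ b] by metis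
  qed
  finally show ?thesis .
qed

context treeG begin

definition Qm :: "real mat" where "Qm = signless_laplacian n E"
definition Xm :: "real mat" where "Xm = mat n n (\<lambda>(a, b). Xf (Suc a) (Suc b))"
definition Pm :: "real mat" where "Pm = mat n n (\<lambda>(a, b). Pf (Suc a) (Suc b))"

lemma Qm_c: "Qm \<in> carrier_mat n n" unfolding Qm_def signless_laplacian_def by simp
lemma Xm_c: "Xm \<in> carrier_mat n n" unfolding Xm_def by simp
lemma Pm_c: "Pm \<in> carrier_mat n n" unfolding Pm_def by simp

lemma Qm_e: "a < n \<Longrightarrow> b < n \<Longrightarrow> Qm $$ (a, b) = Qf (Suc a) (Suc b)"
  unfolding Qm_def signless_laplacian_def using Qf_eq[of "Suc a" "Suc b"] by simp
lemma Xm_e: "a < n \<Longrightarrow> b < n \<Longrightarrow> Xm $$ (a, b) = Xf (Suc a) (Suc b)"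
  unfolding Xm_def by simp
lemma Pm_e: "a < n \<Longrightarrow> b < n \<Longrightarrow> Pm $$ (a, b) = Pf (Suc a) (Suc b)"
  unfolding Pm_def by simp

lemma QX: "Qm * Xm = Pm"
proof (rule eq_matI)
  fix a b assume "a < dim_row Pm" "b < dim_col Pm"
  then have a: "a < n" and b: "b < n" using Pm_c by auto
  have "(Qm * Xm) $$ (a, b) = (\<Sum>v\<in>{1..n}. Qf (Suc a) v * Xf v (Suc b))"
    by (rule mat_prod_f[OF Qm_c Xm_c Qm_e Xm_e a b])
  also have "\<dots> = Pf (Suc a) (Suc b)" using QX_entry a b by simp
  finally show "(Qm * Xm) $$ (a, b) = Pm $$ (a, b)" using Pm_e a b by simp
qed (use Qm_c Xm_c Pm_c in auto)

lemma XQ: "Xm * Qm = Pm"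
proof (rule eq_matI)
  fix a b assume "a < dim_row Pm" "b < dim_col Pm"
  then have a: "a < n" and b: "b < n" using Pm_c by auto
  have "(Xm * Qm) $$ (a, b) = (\<Sum>v\<in>{1..n}. Xf (Suc a) v * Qf v (Suc b))"
    by (rule mat_prod_f[OF Xm_c Qm_c Xm_e Qm_e a b])
  also have "\<dots> = (\<Sum>v\<in>{1..n}. Qf (Suc b) v * Xf v (Suc a))"
    by (intro sum.cong refl) (simp add: Xf_sym Qf_sym)
  also have "\<dots> = Pf (Suc a) (Suc b)" using QX_entry a b Pf_sym by simp
  finally show "(Xm * Qm) $$ (a, b) = Pm $$ (a, b)" using Pm_e a b by simp
qed (use Qm_c Xm_c Pm_c in auto)

lemma PQ: "Pm * Qm = Qm"
proof (rule eq_matI)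
  fix a b assume "a < dim_row Qm" "b < dim_col Qm"
  then have a: "a < n" and b: "b < n" using Qm_c by auto
  have "(Pm * Qm) $$ (a, b) = (\<Sum>v\<in>{1..n}. Pf (Suc a) v * Qf v (Suc b))"
    by (rule mat_prod_f[OF Pm_c Qm_c Pm_e Qm_e a b])
  also have "\<dots> = Qf (Suc a) (Suc b)" using PQ_entry a b by simp
  finally show "(Pm * Qm) $$ (a, b) = Qm $$ (a, b)" using Qm_e a b by simp
qed (use Qm_c Pm_c in auto)

lemma PX: "Pm * Xm = Xm"
proof (rule eq_matI)
  fix a b assume "a < dim_row Xm" "b < dim_col Xm"
  then have a: "a < n" and b: "b < n" using Xm_c by auto
  have "(Pm * Xm) $$ (a, b) = (\<Sum>v\<in>{1..n}. Pf (Suc a) v * Xf v (Suc b))"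
    by (rule mat_prod_f[OF Pm_c Xm_c Pm_e Xm_e a b])
  also have "\<dots> = (\<Sum>v\<in>{1..n}. Xf (Suc b) v * Pf v (Suc a))"
    by (intro sum.cong refl) (simp add: Xf_sym Pf_sym)
  also have "\<dots> = Xf (Suc b) (Suc a)" using XP_entry a b by simp
  also have "\<dots> = Xf (Suc a) (Suc b)" by (rule Xf_sym)
  finally show "(Pm * Xm) $$ (a, b) = Xm $$ (a, b)" using Xm_e a b by simp
qed (use Xm_c Pm_c in auto)

lemma Pt: "transpose_mat Pm = Pm"
proof (rule eq_matI)
  fix a b assume "a < dim_row Pm" "b < dim_col Pm"
  then have a: "a < n" and b: "b < n" using Pm_c by auto
  show "transpose_mat Pm $$ (a, b) = Pm $$ (a, b)" using a b Pm_c Pm_e Pf_sym by simp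
qed (use Pm_c in auto)

lemma isMP: "is_MP_inverse Qm Xm"
  unfolding is_MP_inverse_def
  using Qm_c Xm_c QX XQ PQ PX Pt by simp

lemma MP_eq: "MP_inverse Qm = Xm"
  unfolding MP_inverse_def
proof (rule the_equality)
  show "is_MP_inverse Qm Xm" by (rule isMP)
  fix Y assume "is_MP_inverse Qm Y"
  then show "Y = Xm" using MP_unique[OF Qm_c _ isMP] by simp
qed

lemma Mf_bracket:
  assumes i: "i \<in> {1..n}" and j: "j \<in> {1..n}"
  shows "Mf i j =
      (\<Sum>e\<in>{e\<in>E. i \<in> Hd e \<and> j \<in> Hd e}. real (card (Tl e))^2)
     + (\<Sum>e\<in>{e\<in>E. i \<in> Tl e \<and> j \<in> Tl e}. real (card (Hd e))^2)
     - (\<Sum>e\<in>{e\<in>E. e \<in> path_edges E i j}. real (card (Hd e)) * real (card (Tl e)))"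
proof -
  have pe: "e \<in> path_edges E i j \<longleftrightarrow> \<not> (i \<in> Hd e \<longleftrightarrow> j \<in> Hd e)" if e: "e \<in> E" for e
    using path_edges_eq[OF i j] sameside[OF e i j] e by simp
  have per: "w e i * w e j =
      (if i \<in> Hd e \<and> j \<in> Hd e then real (card (Tl e))^2 else 0)
    + (if i \<in> Tl e \<and> j \<in> Tl e then real (card (Hd e))^2 else 0)
    - (if e \<in> path_edges E i j then real (card (Hd e)) * real (card (Tl e)) else 0)" if e: "e \<in> E" for e
  proof -
    have iT: "i \<in> Tl e \<longleftrightarrow> i \<notin> Hd e" using HT_union[OF e] HT_disj[OF e] i by blast
    have jT: "j \<in> Tl e \<longleftrightarrow> j \<notin> Hd e" using HT_union[OF e] HT_disj[OF e] j by blast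
    show ?thesis unfolding w_def pe[OF e] iT jT
      by (cases "i \<in> Hd e"; cases "j \<in> Hd e") (simp_all add: power2_eq_square)
  qed
  have "Mf i j = (\<Sum>e\<in>E. (if i \<in> Hd e \<and> j \<in> Hd e then real (card (Tl e))^2 else 0)
    + (if i \<in> Tl e \<and> j \<in> Tl e then real (card (Hd e))^2 else 0)
    - (if e \<in> path_edges E i j then real (card (Hd e)) * real (card (Tl e)) else 0))"
    unfolding Mf_def by (intro sum.cong refl) (rule per)
  also have "\<dots> = (\<Sum>e\<in>E. (if i \<in> Hd e \<and> j \<in> Hd e then real (card (Tl e))^2 else 0))
    + (\<Sum>e\<in>E. (if i \<in> Tl e \<and> j \<in> Tl e then real (card (Hd e))^2 else 0))
    - (\<Sum>e\<in>E. (if e \<in> path_edges E i j then real (card (Hd e)) * real (card (Tl e)) else 0))"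
    by (simp add: sum.distrib sum_subtractf)
  also have "\<dots> = (\<Sum>e\<in>{e\<in>E. i \<in> Hd e \<and> j \<in> Hd e}. real (card (Tl e))^2)
     + (\<Sum>e\<in>{e\<in>E. i \<in> Tl e \<and> j \<in> Tl e}. real (card (Hd e))^2)
     - (\<Sum>e\<in>{e\<in>E. e \<in> path_edges E i j}. real (card (Hd e)) * real (card (Tl e)))"
    by (simp add: sum.inter_filter[OF finE])
  finally show ?thesis .
qed

end

theorem mainTheorem3:
  fixes n :: nat and E :: "nat set set"
  assumes "is_tree {1..n} E"
    and "i \<in> {1..n}" and "j \<in> {1..n}"
  shows "MP_inverse (signless_laplacian n E) $$ (i - 1, j - 1) =
    (-1) ^ gdist E i j / (real n)^2 *
      ((\<Sum>e\<in>{e\<in>E. i \<in> head_comp {1..n} E e \<and> j \<in> head_comp {1..n} E e}.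
           real (card (tail_comp {1..n} E e))^2)
     + (\<Sum>e\<in>{e\<in>E. i \<in> tail_comp {1..n} E e \<and> j \<in> tail_comp {1..n} E e}.
           real (card (head_comp {1..n} E e))^2)
     - (\<Sum>e\<in>{e\<in>E. e \<in> path_edges E i j}.
           real (card (head_comp {1..n} E e)) * real (card (tail_comp {1..n} E e))))"
proof -
  interpret treeG n E using assms(1) by unfold_locales
  have i: "i - 1 < n" "Suc (i - 1) = i" and j: "j - 1 < n" "Suc (j - 1) = j" using assms(2,3) by auto
  have "MP_inverse (signless_laplacian n E) $$ (i - 1, j - 1) = Xf i j"
    using MP_eq Xm_e[OF i(1) j(1)] i(2) j(2) unfolding Qm_def by simp
  also have "\<dots> = (-1) ^ gdist E i j / (real n)^2 * Mf i j"
    unfolding Xf_def gdist_sign[OF assms(2,3)] by simp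
  also have "\<dots> = (-1) ^ gdist E i j / (real n)^2 *
      ((\<Sum>e\<in>{e\<in>E. i \<in> head_comp {1..n} E e \<and> j \<in> head_comp {1..n} E e}.
           real (card (tail_comp {1..n} E e))^2)
     + (\<Sum>e\<in>{e\<in>E. i \<in> tail_comp {1..n} E e \<and> j \<in> tail_comp {1..n} E e}.
           real (card (head_comp {1..n} E e))^2)
     - (\<Sum>e\<in>{e\<in>E. e \<in> path_edges E i j}.
           real (card (head_comp {1..n} E e)) * real (card (tail_comp {1..n} E e))))"
    using Mf_bracket[OF assms(2,3)] unfolding Hd_def Tl_def by simp
  finally show ?thesis .
qed

end
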